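(* Let $(M,(I,O))$ be a left-connected oriented map and $A=(H,\tau,\alpha)=\Lambda_1(M,(I,O))$. Then $A$ is a plane tree, and $(I,O)$ is the root-to-leaves orientation of $A$ (every non-root vertex of $A$ is incident to exactly one half-edge of $I$).
   Context: Permutations compose right to left. A map is $M=(H,\sigma,\alpha)$, $H$ finite, $\alpha$ a fixed-point-free involution, $\sigma$ a permutation, $\langle\sigma,\alpha\rangle$ transitive, root $r\in H$; vertices, edges, faces are cycles of $\sigma,\alpha,\phi=\sigma\alpha$; genus via $v-e+f=2-2g$; a plane tree is a map with one face and genus $0$. For a permutation $\pi$ and a subset $S$, $\pi_{|S}$ is obtained from the cycles of $\pi$ by erasing elements not in $S$. An orientation is a partition $H=I\uplus O$ with $\alpha(I)=O$. A left-path is a sequence $h_1,\dots,h_k\in I$ such that with $h_0=r$, for each $j$ there is $q_j>0$ with $h_{j-1}=\sigma^{q_j}(\alpha(h_j))$ and $\sigma^p(\alpha(h_j))\in O$ for $0\le p<q_j$; $(M,(I,O))$ is left-connected if every element of $I$ ends some left-path. Unfolding: take new elements $i,o\notin H$, $H'=H\cup\{i,o\}$, $I'=I\cup\{i\}$, $O'=O\cup\{o\}$, $\alpha'$ extending $\alpha$ with $\alpha'(i)=o$. $\sigma'$ is obtained from $\sigma$ by inserting $i$ just before $r$ in its cycle ($\sigma'(\sigma^{-1}(r))=i$, $\sigma'(i)=r$) and $\sigma'(o)=o$. $\pi_\circ=\sigma'_{|I'}$ regarded as a permutation of $H'$ fixing $O'$; $\tau'=\sigma'\pi_\circ^{-1}$;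 $\tau=\tau'_{|H}$. Then $\Lambda_1(M,(I,O))=(H,\tau,\alpha)$ with root $\tau'(i)$. *)

theory Defs
  imports "HOL-Combinatorics.Combinatorics"
begin

text \<open>Permutations are functions; composition right to left, so the product
  sigma alpha is sigma \<circ> alpha.\<close>

definition ncycles :: "('a \<Rightarrow> 'a) \<Rightarrow> 'a set \<Rightarrow> nat" where
  "ncycles p H = card {orbit p x | x. x \<in> H}"

definition is_map :: "'a set \<Rightarrow> ('a \<Rightarrow> 'a) \<Rightarrow> ('a \<Rightarrow> 'a) \<Rightarrow> bool" where
  "is_map H \<sigma> \<alpha> \<longleftrightarrow> finite H \<and> \<sigma> permutes H \<and> \<alpha> permutes H
     \<and> (\<forall>h\<in>H. \<alpha> h \<noteq> h \<and> \<alpha> (\<alpha> h) = h)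
     \<and> (\<forall>x\<in>H. \<forall>y\<in>H. (x, y) \<in> ({(h, \<sigma> h) | h. h \<in> H} \<union> {(h, \<alpha> h) | h. h \<in> H})\<^sup>*)"

definition rooted_map :: "'a set \<Rightarrow> ('a \<Rightarrow> 'a) \<Rightarrow> ('a \<Rightarrow> 'a) \<Rightarrow> 'a \<Rightarrow> bool" where
  "rooted_map H \<sigma> \<alpha> r \<longleftrightarrow> is_map H \<sigma> \<alpha> \<and> r \<in> H"

definition nvertices where "nvertices H \<sigma> \<alpha> = ncycles \<sigma> H"
definition nedges where "nedges H \<sigma> \<alpha> = ncycles \<alpha> H"
definition nfaces where "nfaces H \<sigma> \<alpha> = ncycles (\<sigma> \<circ> \<alpha>) H"

definition has_genus :: "'a set \<Rightarrow> ('a \<Rightarrow> 'a) \<Rightarrow> ('a \<Rightarrow> 'a) \<Rightarrow> nat \<Rightarrow> bool" where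
  "has_genus H \<sigma> \<alpha> g \<longleftrightarrow>
     int (nvertices H \<sigma> \<alpha>) - int (nedges H \<sigma> \<alpha>) + int (nfaces H \<sigma> \<alpha>) = 2 - 2 * int g"

definition plane_tree :: "'a set \<Rightarrow> ('a \<Rightarrow> 'a) \<Rightarrow> ('a \<Rightarrow> 'a) \<Rightarrow> 'a \<Rightarrow> bool" where
  "plane_tree H \<sigma> \<alpha> r \<longleftrightarrow> rooted_map H \<sigma> \<alpha> r \<and> nfaces H \<sigma> \<alpha> = 1 \<and> has_genus H \<sigma> \<alpha> 0"

text \<open>Restriction pi_{|S}: erase elements not in S from the cycles of pi;
  regarded as a permutation fixing everything outside S.\<close>
definition restr :: "('a \<Rightarrow> 'a) \<Rightarrow> 'a set \<Rightarrow> 'a \<Rightarrow> 'a" where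
  "restr p S x = (if x \<in> S then (p ^^ (LEAST k. 0 < k \<and> (p ^^ k) x \<in> S)) x else x)"

definition orientation :: "'a set \<Rightarrow> ('a \<Rightarrow> 'a) \<Rightarrow> 'a set \<Rightarrow> 'a set \<Rightarrow> bool" where
  "orientation H \<alpha> I Ou \<longleftrightarrow> I \<union> Ou = H \<and> I \<inter> Ou = {} \<and> \<alpha> ` I = Ou"

definition left_step :: "('a \<Rightarrow> 'a) \<Rightarrow> ('a \<Rightarrow> 'a) \<Rightarrow> 'a set \<Rightarrow> 'a \<Rightarrow> 'a \<Rightarrow> bool" where
  "left_step \<sigma> \<alpha> Ou x h \<longleftrightarrow>
     (\<exists>q>0. x = (\<sigma> ^^ q) (\<alpha> h) \<and> (\<forall>p<q. (\<sigma> ^^ p) (\<alpha> h) \<in> Ou))"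

text \<open>left-path h_1..h_k (k >= 1) with h_0 = r\<close>
definition left_path ::
  "('a \<Rightarrow> 'a) \<Rightarrow> ('a \<Rightarrow> 'a) \<Rightarrow> 'a \<Rightarrow> 'a set \<Rightarrow> 'a set \<Rightarrow> 'a list \<Rightarrow> bool" where
  "left_path \<sigma> \<alpha> r I Ou hs \<longleftrightarrow> hs \<noteq> [] \<and> set hs \<subseteq> I
     \<and> (\<forall>j<length hs. left_step \<sigma> \<alpha> Ou ((r # hs) ! j) (hs ! j))"

definition left_connected ::
  "('a \<Rightarrow> 'a) \<Rightarrow> ('a \<Rightarrow> 'a) \<Rightarrow> 'a \<Rightarrow> 'a set \<Rightarrow> 'a set \<Rightarrow> bool" where
  "left_connected \<sigma> \<alpha> r I Ou \<longleftrightarrow>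
     (\<forall>h\<in>I. \<exists>hs. left_path \<sigma> \<alpha> r I Ou hs \<and> last hs = h)"

text \<open>Unfolding with fresh elements ii (in I') and oo (in Ou').\<close>
definition sigma' :: "('a \<Rightarrow> 'a) \<Rightarrow> 'a \<Rightarrow> 'a \<Rightarrow> 'a \<Rightarrow> 'a \<Rightarrow> 'a" where
  "sigma' \<sigma> r ii oo x =
     (if x = ii then r else if x = oo then oo else if \<sigma> x = r then ii else \<sigma> x)"

definition pi_circ :: "('a \<Rightarrow> 'a) \<Rightarrow> 'a \<Rightarrow> 'a set \<Rightarrow> 'a \<Rightarrow> 'a \<Rightarrow> 'a \<Rightarrow> 'a" where
  "pi_circ \<sigma> r I ii oo = restr (sigma' \<sigma> r ii oo) (insert ii I)"

definition tau' :: "('a \<Rightarrow> 'a) \<Rightarrow> 'a \<Rightarrow> 'a set \<Rightarrow> 'a \<Rightarrow> 'a \<Rightarrow> 'a \<Rightarrow> 'a" where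
  "tau' \<sigma> r I ii oo = sigma' \<sigma> r ii oo \<circ> inv (pi_circ \<sigma> r I ii oo)"

definition lambda1_tau :: "'a set \<Rightarrow> ('a \<Rightarrow> 'a) \<Rightarrow> 'a \<Rightarrow> 'a set \<Rightarrow> 'a \<Rightarrow> 'a \<Rightarrow> 'a \<Rightarrow> 'a" where
  "lambda1_tau H \<sigma> r I ii oo = restr (tau' \<sigma> r I ii oo) H"

definition lambda1_root :: "('a \<Rightarrow> 'a) \<Rightarrow> 'a \<Rightarrow> 'a set \<Rightarrow> 'a \<Rightarrow> 'a \<Rightarrow> 'a" where
  "lambda1_root \<sigma> r I ii oo = tau' \<sigma> r I ii oo ii"

end

theory Submission
  imports Defs
begin


lemma perm_from_inj:
  assumes "finite A" "inj_on f A" "f ` A \<subseteq> A" "\<forall>x. x \<notin> A \<longrightarrow> f x = x"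
  shows "f permutes A"
proof -
  have "f ` A = A" using endo_inj_surj assms by blast
  hence "bij_betw f A A" using assms by (simp add: bij_betw_def)
  thus ?thesis unfolding permutes_altdef using assms by auto
qed

lemma funpow_fix: "f h = h \<Longrightarrow> (f ^^ n) h = h"
  by (induction n) auto

lemma funpow_in: "\<forall>x\<in>H. f x \<in> H \<Longrightarrow> x \<in> H \<Longrightarrow> (f ^^ n) x \<in> H"
  by (induction n) auto

lemma skip_reach:
  assumes "\<forall>x\<in>H. \<tau> x \<in> H" "inj_on \<tau> H" "a \<in> H"
  shows "x \<in> H \<Longrightarrow> x \<noteq> a \<Longrightarrow> y \<noteq> a \<Longrightarrow> (\<tau> ^^ n) x = y \<Longrightarrow>
    \<exists>m. ((\<lambda>z. if \<tau> z = a then \<tau> a else \<tau> z) ^^ m) x = y"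
proof (induction n arbitrary: x rule: less_induct)
  case (less n)
  let ?t0 = "(\<lambda>z. if \<tau> z = a then \<tau> a else \<tau> z)"
  show ?case
  proof (cases n)
    case 0 then show ?thesis using less by (intro exI[of _ 0]) auto
  next
    case (Suc k)
    have k: "(\<tau> ^^ k) (\<tau> x) = y" using less(5) Suc by (simp only: funpow_Suc_right comp_apply)
    show ?thesis
    proof (cases "\<tau> x = a")
      case False
      then obtain m where "(?t0 ^^ m) (\<tau> x) = y"
        using less(1)[of k "\<tau> x"] Suc less assms k by auto
      then have "(?t0 ^^ Suc m) x = y" using False by (simp del: funpow.simps add: funpow_Suc_right)
      then show ?thesis by blast
    next
      case True
      then obtain k' where k': "k = Suc k'" using k less(4) by (cases k) auto
      have ka: "(\<tau> ^^ k') (\<tau> a) = y" using k True k' by (simp only: funpow_Suc_right comp_apply)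
      have "\<tau> a \<noteq> a" using True assms less(2,3) by (metis inj_on_def)
      then obtain m where "(?t0 ^^ m) (\<tau> a) = y"
        using less(1)[of k' "\<tau> a"] Suc less assms ka k' by auto
      then have "(?t0 ^^ Suc m) x = y" using True by (simp del: funpow.simps add: funpow_Suc_right)
      then show ?thesis by blast
    qed
  qed
qed

lemma one_face:
  fixes H I :: "'a set" and \<tau> \<alpha> vtx :: "'a \<Rightarrow> 'a" and d :: "'a \<Rightarrow> nat" and c :: 'a
  assumes "finite H" "bij_betw \<tau> H H"
    "\<forall>x\<in>H. \<alpha> x \<in> H \<and> \<alpha> x \<noteq> x \<and> \<alpha> (\<alpha> x) = x"
    "I \<subseteq> H" "\<forall>x\<in>H. x \<in> I \<longleftrightarrow> \<alpha> x \<notin> I"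
    "\<forall>h\<in>I. vtx h = h" "\<forall>x\<in>H. vtx (\<tau> x) = vtx x"
    "\<forall>x\<in>H. vtx x \<in> I \<or> vtx x = c" "c \<notin> I"
    "\<forall>x\<in>H. \<forall>y\<in>H. vtx x = vtx y \<longrightarrow> (\<exists>n. (\<tau>^^n) x = y)"
    "\<forall>h\<in>I. d h = Suc (d (vtx (\<alpha> h)))"
  shows "\<forall>x\<in>H. \<forall>y\<in>H. \<exists>n. ((\<tau> \<circ> \<alpha>)^^n) x = y"
  using assms
proof (induction "card H" arbitrary: H \<tau> I rule: less_induct)
  case less
  note fin = less(2) and bij = less(3) and al = less(4) and IH = less(5) and IO = less(6)
    and vI = less(7) and vt = less(8) and vc = less(9) and cI = less(10) and sc = less(11)
    and dd = less(12)
  have tH: "\<forall>x\<in>H. \<tau> x \<in> H" using bij by (auto simp: bij_betw_def)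
  have tinj: "inj_on \<tau> H" using bij by (auto simp: bij_betw_def)
  show ?case
  proof (cases "H = {}")
    case True then show ?thesis by auto
  next
    case False
    then obtain x0 where "x0 \<in> H" by auto
    hence "I \<noteq> {}" using IO by blast
    have finI: "finite I" using fin IH finite_subset by auto
    have "Max (d ` I) \<in> d ` I" using finI \<open>I \<noteq> {}\<close> by (intro Max_in) auto
    then obtain h where hI: "h \<in> I" and hM: "d h = Max (d ` I)" by auto
    have hmax: "\<forall>g\<in>I. d g \<le> d h" using hM finI by auto
    have hH: "h \<in> H" using hI IH by auto
    have leaf: "\<tau> h = h"
    proof (rule ccontr)
      assume ne: "\<tau> h \<noteq> h"
      have th: "\<tau> h \<in> H" using tH hH by auto
      have vth: "vtx (\<tau> h) = h" using vt vI hH hI by auto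
      have "\<tau> h \<notin> I" using vth vI ne by auto
      hence gI: "\<alpha> (\<tau> h) \<in> I" using IO th by auto
      have "vtx (\<alpha> (\<alpha> (\<tau> h))) = h" using al th vth by auto
      hence "d (\<alpha> (\<tau> h)) = Suc (d h)" using dd gI by auto
      thus False using hmax gI by fastforce
    qed
    define a where "a = \<alpha> h"
    have alh: "\<alpha> h \<in> H \<and> \<alpha> h \<noteq> h \<and> \<alpha> (\<alpha> h) = h" using al hH by blast
    have aH: "a \<in> H" and ah: "a \<noteq> h" and aa: "\<alpha> a = h"
      using alh a_def by auto
    have aI: "a \<notin> I" using IO hH hI a_def by blast
    have vh: "\<And>x. x \<in> H \<Longrightarrow> vtx x = h \<Longrightarrow> x = h"
    proof -
      fix x assume "x \<in> H" "vtx x = h"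
      then obtain n where "(\<tau>^^n) h = x" using sc hH vI hI by metis
      thus "x = h" using funpow_fix[of \<tau> h n] leaf by simp
    qed
    have ta_h: "\<tau> a \<noteq> h" using leaf tinj aH hH ah by (metis inj_on_def)
    define H0 where "H0 = H - {h, a}"
    define t0 where "t0 = (\<lambda>z. if \<tau> z = a then \<tau> a else \<tau> z)"
    define I0 where "I0 = I - {h}"
    have t0H: "\<forall>x\<in>H0. t0 x \<in> H0"
    proof
      fix x assume x: "x \<in> H0"
      have "\<tau> x \<noteq> h" using x leaf tinj hH unfolding H0_def by (metis DiffE inj_on_def insertCI)
      moreover have "\<tau> x = a \<Longrightarrow> \<tau> a \<noteq> a" using x tinj aH unfolding H0_def by (metis DiffE inj_on_def insertCI)
      ultimately show "t0 x \<in> H0" using x tH aH ta_h unfolding H0_def t0_def by auto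
    qed
    have t0inj: "inj_on t0 H0"
    proof (rule inj_onI)
      fix x y assume "x \<in> H0" "y \<in> H0" "t0 x = t0 y"
      thus "x = y" using tinj aH unfolding H0_def t0_def inj_on_def
        by (auto split: if_splits)
    qed
    have finH0: "finite H0" using fin H0_def by auto
    have bij0: "bij_betw t0 H0 H0"
      using endo_inj_surj[OF finH0 _ t0inj] t0H t0inj by (auto simp: bij_betw_def)
    have cardlt: "card H0 < card H" using fin hH unfolding H0_def by (intro psubset_card_mono) auto
    have IH0: "\<forall>x\<in>H0. \<forall>y\<in>H0. \<exists>n. ((t0 \<circ> \<alpha>)^^n) x = y"
    proof (rule less(1)[OF cardlt finH0 bij0])
      show "\<forall>x\<in>H0. \<alpha> x \<in> H0 \<and> \<alpha> x \<noteq> x \<and> \<alpha> (\<alpha> x) = x"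
        using al aa a_def unfolding H0_def by auto
      show "I0 \<subseteq> H0" using IH aI unfolding I0_def H0_def by auto
      show "\<forall>x\<in>H0. x \<in> I0 \<longleftrightarrow> \<alpha> x \<notin> I0"
      proof
        fix x assume x: "x \<in> H0"
        hence xH: "x \<in> H" and xa: "x \<noteq> a" unfolding H0_def by auto
        have "\<alpha> (\<alpha> x) = x" using al xH by blast
        hence "\<alpha> x \<noteq> h" using xa a_def by metis
        moreover have "x \<in> I \<longleftrightarrow> \<alpha> x \<notin> I" using IO xH by blast
        moreover have "x \<noteq> h" using x H0_def by auto
        ultimately show "x \<in> I0 \<longleftrightarrow> \<alpha> x \<notin> I0" unfolding I0_def by auto
      qed
      show "\<forall>h\<in>I0. vtx h = h" using vI I0_def by auto
      show "\<forall>x\<in>H0. vtx (t0 x) = vtx x" using vt tH aH unfolding H0_def t0_def by auto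
      show "\<forall>x\<in>H0. vtx x \<in> I0 \<or> vtx x = c" using vc vh unfolding H0_def I0_def by auto
      show "c \<notin> I0" using cI I0_def by auto
      show "\<forall>x\<in>H0. \<forall>y\<in>H0. vtx x = vtx y \<longrightarrow> (\<exists>n. (t0^^n) x = y)"
      proof (intro ballI impI)
        fix x y assume "x \<in> H0" "y \<in> H0" "vtx x = vtx y"
        then obtain n where "(\<tau>^^n) x = y" using sc unfolding H0_def by auto
        thus "\<exists>n. (t0^^n) x = y" using skip_reach[OF tH tinj aH, of x y n] \<open>x \<in> H0\<close> \<open>y \<in> H0\<close>
          unfolding t0_def H0_def by auto
      qed
      show "\<forall>h\<in>I0. d h = Suc (d (vtx (\<alpha> h)))" using dd I0_def by auto
    qed
    define \<phi> where "\<phi> = \<tau> \<circ> \<alpha>"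
    have trans: "\<And>x y z. \<exists>n. (\<phi>^^n) x = y \<Longrightarrow> \<exists>m. (\<phi>^^m) y = z \<Longrightarrow> \<exists>k. (\<phi>^^k) x = z"
      by (metis funpow_add comp_apply)
    have one: "\<And>x. \<exists>n. (\<phi>^^n) x = \<phi> x" by (metis One_nat_def funpow.simps(2) funpow_0 comp_apply)
    have zero: "\<And>x. \<exists>n. (\<phi>^^n) x = x" by (metis funpow_0)
    have pa: "\<phi> a = h" using aa leaf \<phi>_def by simp
    have ph: "\<phi> h = \<tau> a" using a_def \<phi>_def by simp
    have transfer: "\<And>n x. x \<in> H0 \<Longrightarrow> \<exists>m. (\<phi>^^m) x = ((t0 \<circ> \<alpha>)^^n) x"
    proof -
      fix n show "\<And>x. x \<in> H0 \<Longrightarrow> \<exists>m. (\<phi>^^m) x = ((t0 \<circ> \<alpha>)^^n) x"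
      proof (induction n)
        case 0 then show ?case by (metis funpow_0)
      next
        case (Suc n)
        have xH: "x \<in> H" "x \<noteq> h" "x \<noteq> a" using Suc.prems H0_def by auto
        have alx: "\<alpha> x \<in> H \<and> \<alpha> (\<alpha> x) = x" using al xH by blast
        have aH0: "\<alpha> x \<in> H0" unfolding H0_def using alx xH aa a_def by auto
        have x0: "(t0 \<circ> \<alpha>) x \<in> H0" using t0H aH0 by auto
        then obtain m where m: "(\<phi>^^m) ((t0 \<circ> \<alpha>) x) = ((t0 \<circ> \<alpha>)^^n) ((t0 \<circ> \<alpha>) x)"
          using Suc.IH by blast
        have "\<exists>k. (\<phi>^^k) x = (t0 \<circ> \<alpha>) x"
        proof (cases "\<tau> (\<alpha> x) = a")
          case True
          have "(\<phi>^^(Suc (Suc (Suc 0)))) x = \<tau> a" using True pa ph \<phi>_def by simp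
          moreover have "(t0 \<circ> \<alpha>) x = \<tau> a" using True t0_def by simp
          ultimately show ?thesis by metis
        next
          case False
          then have "(t0 \<circ> \<alpha>) x = \<phi> x" using t0_def \<phi>_def by simp
          then show ?thesis using one by metis
        qed
        then obtain k where "(\<phi>^^k) x = (t0 \<circ> \<alpha>) x" by blast
        hence "(\<phi>^^(m + k)) x = ((t0 \<circ> \<alpha>)^^n) ((t0 \<circ> \<alpha>) x)"
          using m by (simp add: funpow_add)
        thus ?case by (metis funpow_Suc_right comp_apply)
      qed
    qed
    show ?thesis
    proof (cases "H0 = {}")
      case True
      hence Hha: "H = {h, a}" using hH aH H0_def by auto
      have "\<tau> a \<in> H" using tH aH by auto
      hence taa: "\<tau> a = a" using Hha ta_h by auto
      have "\<phi> h = a" using ph taa by simp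
      show ?thesis unfolding \<phi>_def[symmetric] Hha using zero one pa \<open>\<phi> h = a\<close> by (metis insertE empty_iff)
    next
      case False
      have tana: "\<tau> a \<noteq> a"
      proof
        assume taa: "\<tau> a = a"
        have va: "vtx a = c"
        proof (rule ccontr)
          assume "vtx a \<noteq> c"
          hence g: "vtx a \<in> I" using vc aH by auto
          then obtain n where "(\<tau>^^n) a = vtx a" using sc aH IH vI by (metis subsetD)
          hence "vtx a = a" using funpow_fix[of \<tau> a n] taa by simp
          thus False using g aI by simp
        qed
        have fa: "\<And>u. u \<in> H \<Longrightarrow> vtx u = vtx a \<Longrightarrow> u = a"
        proof -
          fix u assume "u \<in> H" "vtx u = vtx a"
          then obtain n where "(\<tau>^^n) a = u" using sc aH by metis
          thus "u = a" using funpow_fix[of \<tau> a n] taa by simp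
        qed
        have key: "\<And>k. \<forall>w\<in>H0. vtx w \<in> I \<longrightarrow> d (vtx w) = k \<longrightarrow> False"
        proof -
          fix k show "\<forall>w\<in>H0. vtx w \<in> I \<longrightarrow> d (vtx w) = k \<longrightarrow> False"
          proof (induction k rule: less_induct)
            case (less k)
            show ?case
            proof (intro ballI impI)
              fix w assume w: "w \<in> H0" "vtx w \<in> I" "d (vtx w) = k"
              define g where "g = vtx w"
              have gI: "g \<in> I" using w g_def by simp
              have gH: "g \<in> H" using gI IH by auto
              have gh: "g \<noteq> h" using vh w g_def H0_def by auto
              have alg: "\<alpha> g \<in> H \<and> \<alpha> (\<alpha> g) = g" using al gH by blast
              have agH0: "\<alpha> g \<in> H0" unfolding H0_def using alg gh aa a_def gI aI by auto
              show False
              proof (cases "vtx (\<alpha> g) \<in> I")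
                case True
                have "d g = Suc (d (vtx (\<alpha> g)))" using dd gI by blast
                thus False using less.IH[of "d (vtx (\<alpha> g))"] True agH0 w g_def by auto
              next
                case False
                hence "vtx (\<alpha> g) = vtx a" using vc alg va by auto
                hence "\<alpha> g = a" using fa alg by blast
                thus False using agH0 H0_def by auto
              qed
            qed
          qed
        qed
        obtain u where u: "u \<in> H0" using False by auto
        show False
        proof (cases "vtx u \<in> I")
          case True thus False using key u by blast
        next
          case False
          hence "vtx u = vtx a" using vc u va H0_def by auto
          hence "u = a" using fa u H0_def by auto
          thus False using u H0_def by auto
        qed
      qed
      have "a \<in> \<tau> ` H" using bij aH by (simp add: bij_betw_def)
      then obtain w where wH: "w \<in> H" and tw: "\<tau> w = a" by auto
      have wh: "w \<noteq> h" using tw leaf ah by auto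
      have wa: "w \<noteq> a" using tw tana by auto
      have alw: "\<alpha> w \<in> H \<and> \<alpha> (\<alpha> w) = w" using al wH by blast
      define z where "z = \<alpha> w"
      have zH0: "z \<in> H0" unfolding H0_def z_def using alw wh wa aa a_def by auto
      have pz: "\<phi> z = a" using alw tw z_def \<phi>_def by simp
      have taH0: "\<tau> a \<in> H0" using tana ta_h tH aH H0_def by auto
      have toH0: "\<And>x. x \<in> H \<Longrightarrow> \<exists>u\<in>H0. \<exists>n. (\<phi>^^n) x = u"
      proof -
        fix x assume x: "x \<in> H"
        show "\<exists>u\<in>H0. \<exists>n. (\<phi>^^n) x = u"
        proof (cases "x \<in> H0")
          case True thus ?thesis using zero by blast
        next
          case False
          hence "x = h \<or> x = a" using x H0_def by auto
          moreover have "\<exists>n. (\<phi>^^n) h = \<tau> a" using one ph by metis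
          moreover have "\<exists>n. (\<phi>^^n) a = \<tau> a" using trans[OF one one] pa ph by metis
          ultimately show ?thesis using taH0 by blast
        qed
      qed
      have fromH0: "\<And>u y. u \<in> H0 \<Longrightarrow> y \<in> H \<Longrightarrow> \<exists>n. (\<phi>^^n) u = y"
      proof -
        fix u y assume u: "u \<in> H0" and y: "y \<in> H"
        have r0: "\<And>v. v \<in> H0 \<Longrightarrow> \<exists>n. (\<phi>^^n) u = v"
        proof -
          fix v assume "v \<in> H0"
          then obtain n where "((t0 \<circ> \<alpha>)^^n) u = v" using IH0 u by blast
          thus "\<exists>n. (\<phi>^^n) u = v" using transfer[OF u, of n] by metis
        qed
        have uz: "\<exists>n. (\<phi>^^n) u = a" using trans[OF r0[OF zH0] one] pz by metis
        show "\<exists>n. (\<phi>^^n) u = y"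
        proof (cases "y \<in> H0")
          case True thus ?thesis using r0 by blast
        next
          case False
          hence "y = h \<or> y = a" using y H0_def by auto
          moreover have "\<exists>n. (\<phi>^^n) u = h" using trans[OF uz one] pa by metis
          ultimately show ?thesis using uz by blast
        qed
      qed
      show ?thesis unfolding \<phi>_def[symmetric]
      proof (intro ballI)
        fix x y assume "x \<in> H" "y \<in> H"
        then obtain u n where "u \<in> H0" "(\<phi>^^n) x = u" using toH0 by blast
        thus "\<exists>n. (\<phi>^^n) x = y" using fromH0[OF \<open>u \<in> H0\<close> \<open>y \<in> H\<close>] trans by blast
      qed
    qed
  qed
qed


locale L1 =
  fixes H I Ou :: "'a set" and \<sigma> \<alpha> :: "'a \<Rightarrow> 'a" and r ii oo :: 'a
  assumes rm: "rooted_map H \<sigma> \<alpha> r" and ori: "orientation H \<alpha> I Ou"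
    and lc: "left_connected \<sigma> \<alpha> r I Ou"
    and iiH: "ii \<notin> H" and ooH: "oo \<notin> H" and io: "ii \<noteq> oo"
begin

abbreviation s' where "s' \<equiv> sigma' \<sigma> r ii oo"
abbreviation I' where "I' \<equiv> insert ii I"
abbreviation H' where "H' \<equiv> insert ii (insert oo H)"
abbreviation \<pi> where "\<pi> \<equiv> pi_circ \<sigma> r I ii oo"
abbreviation t' where "t' \<equiv> tau' \<sigma> r I ii oo"
abbreviation t where "t \<equiv> lambda1_tau H \<sigma> r I ii oo"
abbreviation \<rho> where "\<rho> \<equiv> lambda1_root \<sigma> r I ii oo"

lemma finH: "finite H" and sp: "\<sigma> permutes H" and ap: "\<alpha> permutes H"
  and alH: "\<forall>x\<in>H. \<alpha> x \<noteq> x \<and> \<alpha> (\<alpha> x) = x" and rH: "r \<in> H"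
  using rm unfolding rooted_map_def is_map_def by auto

lemma IuO: "I \<union> Ou = H" and IiO: "I \<inter> Ou = {}" and aIO: "\<alpha> ` I = Ou"
  using ori unfolding orientation_def by auto

lemma IsubH: "I \<subseteq> H" and OsubH: "Ou \<subseteq> H" using IuO by auto

lemma aH: "x \<in> H \<Longrightarrow> \<alpha> x \<in> H" using ap by (simp add: permutes_in_image)
lemma aa: "x \<in> H \<Longrightarrow> \<alpha> (\<alpha> x) = x" using alH by blast

lemma IO: "x \<in> H \<Longrightarrow> x \<in> I \<longleftrightarrow> \<alpha> x \<notin> I"
proof -
  assume x: "x \<in> H"
  show ?thesis
  proof
    assume "x \<in> I"
    hence "\<alpha> x \<in> Ou" using aIO by blast
    thus "\<alpha> x \<notin> I" using IiO by blast
  next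
    assume n: "\<alpha> x \<notin> I"
    show "x \<in> I"
    proof (rule ccontr)
      assume "x \<notin> I"
      hence "x \<in> Ou" using IuO x by blast
      then obtain g where g: "g \<in> I" "x = \<alpha> g" using aIO by blast
      have "g \<in> H" using g IsubH by blast
      hence "\<alpha> x = g" using g aa by simp
      thus False using n g by simp
    qed
  qed
qed

lemma OnI: "x \<in> Ou \<Longrightarrow> x \<notin> I" using IiO by auto
lemma HO: "x \<in> H \<Longrightarrow> x \<notin> I \<Longrightarrow> x \<in> Ou" using IuO by auto

lemma sH: "x \<in> H \<Longrightarrow> \<sigma> x \<in> H" using sp by (simp add: permutes_in_image)
lemma sout: "x \<notin> H \<Longrightarrow> \<sigma> x = x" using sp by (simp add: permutes_not_in)
lemma sinj: "\<sigma> x = \<sigma> y \<Longrightarrow> x = y" using sp permutes_inj by (metis injD)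

lemma s'ii: "s' ii = r" by (simp add: sigma'_def)
lemma s'oo: "s' oo = oo" using io by (simp add: sigma'_def)
lemma s'x: "x \<noteq> ii \<Longrightarrow> x \<noteq> oo \<Longrightarrow> s' x = (if \<sigma> x = r then ii else \<sigma> x)"
  by (simp add: sigma'_def)

lemma s'H: "x \<in> H \<Longrightarrow> s' x = (if \<sigma> x = r then ii else \<sigma> x)"
proof -
  assume "x \<in> H"
  hence "x \<noteq> ii" "x \<noteq> oo" using iiH ooH by auto
  thus ?thesis by (rule s'x)
qed

lemma s'r: "s' x = r \<Longrightarrow> x \<in> H' \<Longrightarrow> x = ii"
proof (rule ccontr)
  assume e: "s' x = r" and x: "x \<in> H'" and n: "x \<noteq> ii"
  have "x \<noteq> oo" using e s'oo rH ooH by auto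
  hence "x \<in> H" using x n by auto
  hence "s' x = (if \<sigma> x = r then ii else \<sigma> x)" by (rule s'H)
  thus False using e rH iiH by (auto split: if_splits)
qed

lemma s'o: "s' x = oo \<Longrightarrow> x \<in> H' \<Longrightarrow> x = oo"
proof (rule ccontr)
  assume e: "s' x = oo" and x: "x \<in> H'" and n: "x \<noteq> oo"
  have "x \<noteq> ii" using e s'ii rH ooH by auto
  hence xH: "x \<in> H" using x n by auto
  hence "s' x = (if \<sigma> x = r then ii else \<sigma> x)" by (rule s'H)
  thus False using e io sH[OF xH] ooH by (auto split: if_splits)
qed

lemma s'HH: "x \<in> H \<Longrightarrow> y \<in> H \<Longrightarrow> s' x = s' y \<Longrightarrow> x = y"
proof -
  assume x: "x \<in> H" and y: "y \<in> H" and e: "s' x = s' y"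
  have "(if \<sigma> x = r then ii else \<sigma> x) = (if \<sigma> y = r then ii else \<sigma> y)"
    using e s'H x y by simp
  hence "\<sigma> x = \<sigma> y" using sH[OF x] sH[OF y] iiH by (auto split: if_splits)
  thus "x = y" by (rule sinj)
qed

lemma s'perm: "s' permutes H'"
proof (rule perm_from_inj)
  show "finite H'" using finH by auto
  show "inj_on s' H'"
  proof (rule inj_onI)
    fix x y assume x: "x \<in> H'" and y: "y \<in> H'" and e: "s' x = s' y"
    show "x = y"
    proof (cases "s' x = r \<or> s' x = oo")
      case True
      thus ?thesis
      proof
        assume "s' x = r"
        hence "x = ii" "y = ii" using s'r x y e by auto
        thus ?thesis by simp
      next
        assume "s' x = oo"
        hence "x = oo" "y = oo" using s'o x y e by auto
        thus ?thesis by simp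
      qed
    next
      case False
      hence "x \<noteq> ii \<and> x \<noteq> oo \<and> y \<noteq> ii \<and> y \<noteq> oo" using e s'ii s'oo by auto
      hence "x \<in> H" "y \<in> H" using x y by auto
      thus ?thesis using s'HH e by blast
    qed
  qed
  show "s' ` H' \<subseteq> H'"
  proof
    fix z assume "z \<in> s' ` H'"
    then obtain x where x: "x \<in> H'" and z: "z = s' x" by blast
    show "z \<in> H'"
    proof (cases "x = ii")
      case True thus ?thesis using z s'ii rH by simp
    next
      case F1: False
      show ?thesis
      proof (cases "x = oo")
        case True thus ?thesis using z s'oo by simp
      next
        case False
        hence xH: "x \<in> H" using x F1 by blast
        have "z = (if \<sigma> x = r then ii else \<sigma> x)" using z s'H[OF xH] by simp
        thus ?thesis using sH[OF xH] by (cases "\<sigma> x = r") simp_all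
      qed
    qed
  qed
  show "\<forall>x. x \<notin> H' \<longrightarrow> s' x = x"
  proof (intro allI impI)
    fix x assume x: "x \<notin> H'"
    hence xH: "x \<notin> H" and xi: "x \<noteq> ii" and xo: "x \<noteq> oo" by auto
    have sx: "\<sigma> x = x" using sout[OF xH] .
    have xr: "x \<noteq> r" using xH rH by blast
    have "s' x = (if \<sigma> x = r then ii else \<sigma> x)" using s'x[OF xi xo] .
    thus "s' x = x" using sx xr by simp
  qed
qed

lemma s'permutation: "permutation s'"
  unfolding permutation_permutes using s'perm finH by (intro exI[of _ H']) auto

lemma s'inj: "inj s'" using permutes_inj[OF s'perm] .


lemma ret: "y \<in> I' \<Longrightarrow> \<exists>k. 0 < k \<and> (s'^^k) y \<in> I'"
proof -
  assume y: "y \<in> I'"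
  obtain N where N: "(s'^^N) = id" "N > 0" using permutation_is_nilpotent[OF s'permutation] by blast
  thus ?thesis using y by (intro exI[of _ N]) simp
qed

lemma pi_def2: "\<pi> y = (if y \<in> I' then (s'^^(LEAST k. 0 < k \<and> (s'^^k) y \<in> I')) y else y)"
  unfolding pi_circ_def restr_def by simp

lemma Kex: "y \<in> I' \<Longrightarrow> \<exists>K. 0<K \<and> (s'^^K) y \<in> I' \<and> (\<forall>i. 0<i \<longrightarrow> i<K \<longrightarrow> (s'^^i) y \<notin> I') \<and> \<pi> y = (s'^^K) y"
proof -
  assume y: "y \<in> I'"
  define K where "K = (LEAST k. 0 < k \<and> (s'^^k) y \<in> I')"
  have "0 < K \<and> (s'^^K) y \<in> I'" unfolding K_def using ret[OF y] by (rule LeastI_ex)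
  moreover have "\<forall>i. 0<i \<longrightarrow> i<K \<longrightarrow> (s'^^i) y \<notin> I'"
    unfolding K_def using not_less_Least by blast
  moreover have "\<pi> y = (s'^^K) y" using pi_def2 y K_def by simp
  ultimately show ?thesis by blast
qed

lemma pi_out: "y \<notin> I' \<Longrightarrow> \<pi> y = y" using pi_def2 by simp

lemma pi_in: "y \<in> I' \<Longrightarrow> \<pi> y \<in> I'" using Kex by metis

lemma pi_inj_aux:
  assumes y1: "y1 \<in> I'" and y2: "y2 \<in> I'" and e: "\<pi> y1 = \<pi> y2"
    and K1: "0<K1" "\<pi> y1 = (s'^^K1) y1"
    and K2: "\<forall>i. 0<i \<longrightarrow> i<K2 \<longrightarrow> (s'^^i) y2 \<notin> I'" "\<pi> y2 = (s'^^K2) y2"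
    and le: "K1 \<le> K2"
  shows "y1 = y2"
proof -
  have "(s'^^K2) y2 = (s'^^K1) ((s'^^(K2-K1)) y2)"
    using le by (metis funpow_add comp_apply le_add_diff_inverse)
  hence "(s'^^K1) y1 = (s'^^K1) ((s'^^(K2-K1)) y2)" using e K1 K2 by simp
  hence eq: "y1 = (s'^^(K2-K1)) y2" using inj_fn[OF s'inj, of K1] by (meson injD)
  show ?thesis
  proof (cases "K2 - K1 = 0")
    case True thus ?thesis using eq by simp
  next
    case False
    hence "(s'^^(K2-K1)) y2 \<notin> I'" using K2(1) K1(1) by auto
    thus ?thesis using eq y1 by simp
  qed
qed

lemma pi_inj: "inj \<pi>"
proof (rule injI)
  fix y1 y2 assume e: "\<pi> y1 = \<pi> y2"
  show "y1 = y2"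
  proof (cases "y1 \<in> I'")
    case y1: True
    show ?thesis
    proof (cases "y2 \<in> I'")
      case y2: True
      obtain K1 where K1: "0<K1" "(s'^^K1) y1 \<in> I'" "\<forall>i. 0<i \<longrightarrow> i<K1 \<longrightarrow> (s'^^i) y1 \<notin> I'" "\<pi> y1 = (s'^^K1) y1"
        using Kex[OF y1] by blast
      obtain K2 where K2: "0<K2" "(s'^^K2) y2 \<in> I'" "\<forall>i. 0<i \<longrightarrow> i<K2 \<longrightarrow> (s'^^i) y2 \<notin> I'" "\<pi> y2 = (s'^^K2) y2"
        using Kex[OF y2] by blast
      show ?thesis
      proof (cases "K1 \<le> K2")
        case True thus ?thesis using pi_inj_aux[OF y1 y2 e K1(1) K1(4) K2(3) K2(4)] by simp
      next
        case False
        hence "K2 \<le> K1" by simp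
        thus ?thesis using pi_inj_aux[OF y2 y1 e[symmetric] K2(1) K2(4) K1(3) K1(4)] by simp
      qed
    next
      case y2: False
      thus ?thesis using e pi_out[OF y2] pi_in[OF y1] by simp
    qed
  next
    case y1: False
    show ?thesis
    proof (cases "y2 \<in> I'")
      case y2: True
      thus ?thesis using e pi_out[OF y1] pi_in[OF y2] y1 by metis
    next
      case y2: False
      thus ?thesis using e pi_out[OF y1] pi_out[OF y2] by simp
    qed
  qed
qed

lemma pi_surj: "surj \<pi>"
proof -
  have finI: "finite I'" using finH IsubH finite_subset by auto
  have "\<pi> ` I' = I'"
    using endo_inj_surj[OF finI] pi_in pi_inj by (meson image_subsetI inj_on_subset subset_UNIV)
  show ?thesis
  proof (rule surjI)
    fix x
    show "\<pi> (if x \<in> I' then inv_into I' \<pi> x else x) = x"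
    proof (cases "x \<in> I'")
      case True
      thus ?thesis using \<open>\<pi> ` I' = I'\<close> by (simp add: f_inv_into_f)
    next
      case False thus ?thesis using pi_out by simp
    qed
  qed
qed

lemma pi_bij: "bij \<pi>" using pi_inj pi_surj by (simp add: bij_def)

lemma inv_pi: "inv \<pi> (\<pi> y) = y" using pi_inj by (simp add: inv_f_f)
lemma pi_inv: "\<pi> (inv \<pi> x) = x" using pi_surj by (simp add: surj_f_inv_f)

lemma t'_pi: "t' (\<pi> y) = s' y"
  unfolding tau'_def using inv_pi by simp

lemma t'_inj: "inj t'"
proof -
  have "inj (inv \<pi>)" using bij_imp_bij_inv[OF pi_bij] bij_is_inj by blast
  thus ?thesis unfolding tau'_def using s'inj inj_compose by blast
qed

definition vtx where "vtx x = (s'^^(LEAST k. (s'^^k) x \<in> I')) x"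

lemma V1: "(s'^^j) x \<in> I' \<Longrightarrow> \<forall>i<j. (s'^^i) x \<notin> I' \<Longrightarrow> vtx x = (s'^^j) x"
proof -
  assume a: "(s'^^j) x \<in> I'" "\<forall>i<j. (s'^^i) x \<notin> I'"
  have "(LEAST k. (s'^^k) x \<in> I') = j"
    using a by (intro Least_equality) (auto simp: not_less[symmetric])
  thus ?thesis unfolding vtx_def by simp
qed

lemma least_hit: "\<exists>j. (s'^^j) x \<in> I' \<Longrightarrow> \<exists>j. (s'^^j) x \<in> I' \<and> (\<forall>i<j. (s'^^i) x \<notin> I')"
proof -
  assume e: "\<exists>j. (s'^^j) x \<in> I'"
  define j where "j = (LEAST j. (s'^^j) x \<in> I')"
  have "(s'^^j) x \<in> I'" unfolding j_def using e by (rule LeastI_ex)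
  moreover have "\<forall>i<j. (s'^^i) x \<notin> I'" unfolding j_def using not_less_Least by blast
  ultimately show ?thesis by blast
qed

lemma V2: "y \<in> I' \<Longrightarrow> vtx (s' y) = \<pi> y"
proof -
  assume y: "y \<in> I'"
  obtain K where K: "0<K" "(s'^^K) y \<in> I'" "\<forall>i. 0<i \<longrightarrow> i<K \<longrightarrow> (s'^^i) y \<notin> I'" "\<pi> y = (s'^^K) y"
    using Kex[OF y] by blast
  have sh: "\<And>i. (s'^^i) (s' y) = (s'^^(Suc i)) y" by (simp add: funpow_swap1)
  have "(s'^^(K-1)) (s' y) \<in> I'" using K(1,2) sh[of "K-1"] by simp
  moreover have "\<forall>i<K-1. (s'^^i) (s' y) \<notin> I'"
  proof (intro allI impI)
    fix i assume "i < K-1" thus "(s'^^i) (s' y) \<notin> I'" using K(3)[rule_format, of "Suc i"] sh[of i] by simp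
  qed
  ultimately have "vtx (s' y) = (s'^^(K-1)) (s' y)" by (rule V1)
  thus ?thesis using K(1,4) sh[of "K-1"] by simp
qed

lemma V4: "\<exists>j. (s'^^j) x \<in> I' \<Longrightarrow> x \<notin> I' \<Longrightarrow> vtx (s' x) = vtx x"
proof -
  assume e: "\<exists>j. (s'^^j) x \<in> I'" and x: "x \<notin> I'"
  obtain j where j: "(s'^^j) x \<in> I'" "\<forall>i<j. (s'^^i) x \<notin> I'" using least_hit[OF e] by blast
  have j0: "j > 0" using j x by (cases j) auto
  have sh: "\<And>i. (s'^^i) (s' x) = (s'^^(Suc i)) x" by (simp add: funpow_swap1)
  have "(s'^^(j-1)) (s' x) \<in> I'" using j0 j(1) sh[of "j-1"] by simp
  moreover have "\<forall>i<j-1. (s'^^i) (s' x) \<notin> I'"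
  proof (intro allI impI)
    fix i assume "i < j-1" thus "(s'^^i) (s' x) \<notin> I'" using j(2)[rule_format, of "Suc i"] sh[of i] by simp
  qed
  ultimately have "vtx (s' x) = (s'^^(j-1)) (s' x)" by (rule V1)
  also have "\<dots> = vtx x" using V1[OF j] j0 sh[of "j-1"] by simp
  finally show ?thesis .
qed


lemma OI': "z \<in> Ou \<Longrightarrow> z \<notin> I'" using IiO OsubH iiH by auto

lemma run:
  assumes x: "x \<in> H" and O: "\<forall>p<q. (\<sigma>^^p) x \<in> Ou"
  shows "p \<le> q \<Longrightarrow> (\<exists>j\<le>p. 0<j \<and> (s'^^j) x = ii \<and> (\<forall>i<j. (s'^^i) x \<in> Ou))
     \<or> ((\<forall>i<p. (s'^^i) x \<in> Ou) \<and> (s'^^p) x = (\<sigma>^^p) x \<and> (0<p \<longrightarrow> (\<sigma>^^p) x \<noteq> r))"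
proof (induction p)
  case 0 thus ?case by simp
next
  case (Suc p)
  hence pq: "p < q" by simp
  have zO: "(\<sigma>^^p) x \<in> Ou" using O pq by blast
  from Suc.IH pq consider
    (L) "\<exists>j\<le>p. 0<j \<and> (s'^^j) x = ii \<and> (\<forall>i<j. (s'^^i) x \<in> Ou)"
  | (R) "(\<forall>i<p. (s'^^i) x \<in> Ou) \<and> (s'^^p) x = (\<sigma>^^p) x" by fastforce
  thus ?case
  proof cases
    case L
    then obtain j where "j \<le> p" "0<j \<and> (s'^^j) x = ii \<and> (\<forall>i<j. (s'^^i) x \<in> Ou)" by blast
    hence "j \<le> Suc p \<and> 0<j \<and> (s'^^j) x = ii \<and> (\<forall>i<j. (s'^^i) x \<in> Ou)" by simp
    thus ?thesis by blast
  next
    case R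
    define z where "z = (\<sigma>^^p) x"
    have zH: "z \<in> H" using zO OsubH z_def by auto
    have allO: "\<forall>i<Suc p. (s'^^i) x \<in> Ou"
    proof (intro allI impI)
      fix i assume "i < Suc p"
      thus "(s'^^i) x \<in> Ou" using R zO by (cases "i = p") auto
    qed
    have sz: "(s'^^Suc p) x = s' z" using R z_def by simp
    show ?thesis
    proof (cases "\<sigma> z = r")
      case True
      hence "(s'^^Suc p) x = ii" using sz s'H[OF zH] by simp
      hence "Suc p \<le> Suc p \<and> 0 < Suc p \<and> (s'^^Suc p) x = ii \<and> (\<forall>i<Suc p. (s'^^i) x \<in> Ou)"
        using allO by simp
      thus ?thesis by blast
    next
      case False
      hence "(s'^^Suc p) x = (\<sigma>^^Suc p) x" using sz s'H[OF zH] z_def by simp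
      thus ?thesis using allO False z_def by simp
    qed
  qed
qed

lemma lstep:
  assumes ls: "left_step \<sigma> \<alpha> Ou x h" and h: "h \<in> I" and x: "x \<in> insert r I"
  shows "(\<exists>j. (s'^^j) (\<alpha> h) \<in> I') \<and> (vtx (\<alpha> h) = ii \<or> (x \<in> I \<and> x \<noteq> r \<and> vtx (\<alpha> h) = x))"
proof -
  obtain q where q: "q > 0" "x = (\<sigma>^^q) (\<alpha> h)" "\<forall>p<q. (\<sigma>^^p) (\<alpha> h) \<in> Ou"
    using ls unfolding left_step_def by blast
  have ahH: "\<alpha> h \<in> H" using aH h IsubH by auto
  from run[OF ahH q(3), of q] consider
    (L) j where "0<j" "(s'^^j) (\<alpha> h) = ii" "\<forall>i<j. (s'^^i) (\<alpha> h) \<in> Ou"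
  | (R) "\<forall>i<q. (s'^^i) (\<alpha> h) \<in> Ou" "(s'^^q) (\<alpha> h) = (\<sigma>^^q) (\<alpha> h)" "(\<sigma>^^q) (\<alpha> h) \<noteq> r"
    using q(1) by auto
  thus ?thesis
  proof cases
    case L
    have "vtx (\<alpha> h) = ii" using V1[of j "\<alpha> h"] L OI' by simp
    thus ?thesis using L by auto
  next
    case R
    have xI: "x \<in> I" "x \<noteq> r" using x R(3) q(2) by auto
    have "vtx (\<alpha> h) = x" using V1[of q "\<alpha> h"] R OI' xI q(2) by simp
    have "(s'^^q) (\<alpha> h) \<in> I'" using R(2) xI q(2) by simp
    thus ?thesis using \<open>vtx (\<alpha> h) = x\<close> xI by blast
  qed
qed

definition par where "par h = vtx (\<alpha> h)"

lemma path_facts: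
  assumes lp: "left_path \<sigma> \<alpha> r I Ou hs"
  shows "k < length hs \<Longrightarrow> (\<exists>n. (par^^n) (hs!k) = ii) \<and> (\<exists>j. (s'^^j) (\<alpha> (hs!k)) \<in> I')"
proof (induction k)
  case 0
  have hI: "hs!0 \<in> I" using lp 0 unfolding left_path_def by (meson nth_mem subsetD)
  have ls: "left_step \<sigma> \<alpha> Ou r (hs!0)" using lp 0 unfolding left_path_def by (metis nth_Cons_0)
  have "(\<exists>j. (s'^^j) (\<alpha> (hs!0)) \<in> I') \<and> vtx (\<alpha> (hs!0)) = ii"
    using lstep[OF ls hI] by auto
  hence "(par^^1) (hs!0) = ii" "(\<exists>j. (s'^^j) (\<alpha> (hs!0)) \<in> I')" unfolding par_def by auto
  thus ?case by blast
next
  case (Suc k)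
  have hI: "hs!Suc k \<in> I" using lp Suc.prems unfolding left_path_def by (meson nth_mem subsetD)
  have xI: "hs!k \<in> I" using lp Suc.prems unfolding left_path_def by (meson Suc_lessD nth_mem subsetD)
  have ls: "left_step \<sigma> \<alpha> Ou (hs!k) (hs!Suc k)" using lp Suc.prems unfolding left_path_def by (metis nth_Cons_Suc)
  have L: "(\<exists>j. (s'^^j) (\<alpha> (hs!Suc k)) \<in> I') \<and> (vtx (\<alpha> (hs!Suc k)) = ii \<or> vtx (\<alpha> (hs!Suc k)) = hs!k)"
    using lstep[OF ls hI] xI by auto
  obtain n where n: "(par^^n) (hs!k) = ii" using Suc.IH Suc.prems by auto
  have "\<exists>n. (par^^n) (hs!Suc k) = ii"
  proof (cases "vtx (\<alpha> (hs!Suc k)) = ii")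
    case True
    hence "(par^^1) (hs!Suc k) = ii" unfolding par_def by simp
    thus ?thesis by blast
  next
    case False
    hence "par (hs!Suc k) = hs!k" using L par_def by auto
    hence "(par^^Suc n) (hs!Suc k) = ii" using n by (simp add: funpow_swap1)
    thus ?thesis by blast
  qed
  thus ?case using L by blast
qed

lemma Ine: "I \<noteq> {}"
proof
  assume e: "I = {}"
  hence "r \<notin> I" "\<alpha> r \<notin> I" by auto
  thus False using IO[OF rH] by blast
qed

lemma path_to: "h \<in> I \<Longrightarrow> \<exists>hs. left_path \<sigma> \<alpha> r I Ou hs \<and> hs ! (length hs - 1) = h"
proof -
  assume "h \<in> I"
  then obtain hs where "left_path \<sigma> \<alpha> r I Ou hs" "last hs = h"
    using lc unfolding left_connected_def by blast
  moreover hence "hs \<noteq> []" unfolding left_path_def by blast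
  ultimately show ?thesis by (metis last_conv_nth)
qed

lemma all_hit: "x \<in> H \<Longrightarrow> \<exists>j. (s'^^j) x \<in> I'"
proof -
  assume x: "x \<in> H"
  show ?thesis
  proof (cases "x \<in> I")
    case True thus ?thesis by (intro exI[of _ 0]) simp
  next
    case False
    hence g: "\<alpha> x \<in> I" using IO[OF x] by blast
    obtain hs where hs: "left_path \<sigma> \<alpha> r I Ou hs" "hs ! (length hs - 1) = \<alpha> x"
      using path_to[OF g] by blast
    have "length hs - 1 < length hs" using hs(1) unfolding left_path_def by auto
    hence "\<exists>j. (s'^^j) (\<alpha> (\<alpha> x)) \<in> I'" using path_facts[OF hs(1)] hs(2) by metis
    thus ?thesis using aa[OF x] by simp
  qed
qed

lemma par_reach: "h \<in> I \<Longrightarrow> \<exists>n. (par^^n) h = ii"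
proof -
  assume h: "h \<in> I"
  obtain hs where hs: "left_path \<sigma> \<alpha> r I Ou hs" "hs ! (length hs - 1) = h"
    using path_to[OF h] by blast
  have "length hs - 1 < length hs" using hs(1) unfolding left_path_def by auto
  thus ?thesis using path_facts[OF hs(1)] hs(2) by metis
qed

lemma pre_r: "w \<in> H \<Longrightarrow> \<sigma> w = r \<Longrightarrow> w \<in> Ou"
proof -
  assume w: "w \<in> H" "\<sigma> w = r"
  obtain g where g: "g \<in> I" using Ine by blast
  obtain hs where hs: "left_path \<sigma> \<alpha> r I Ou hs" "hs ! (length hs - 1) = g"
    using path_to[OF g] by blast
  have "left_step \<sigma> \<alpha> Ou r (hs!0)" using hs(1) unfolding left_path_def by (metis length_greater_0_conv nth_Cons_0)
  then obtain q where q: "q > 0" "r = (\<sigma>^^q) (\<alpha> (hs!0))" "\<forall>p<q. (\<sigma>^^p) (\<alpha> (hs!0)) \<in> Ou"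
    unfolding left_step_def by blast
  have "\<sigma> ((\<sigma>^^(q-1)) (\<alpha> (hs!0))) = r" using q(1,2) by (metis Suc_diff_1 funpow.simps(2) comp_apply)
  hence "w = (\<sigma>^^(q-1)) (\<alpha> (hs!0))" using w(2) sinj by metis
  thus ?thesis using q by simp
qed

definition dep where "dep h = (LEAST n. (par^^n) h = ii)"

lemma dep_I: "h \<in> I \<Longrightarrow> dep h = Suc (dep (vtx (\<alpha> h)))"
proof -
  assume h: "h \<in> I"
  obtain n where n: "(par^^n) h = ii" using par_reach[OF h] by blast
  have "h \<noteq> ii" using h IsubH iiH by auto
  hence "(LEAST n. (par^^n) h = ii) = Suc (LEAST m. (par^^(Suc m)) h = ii)"
    using n by (intro Least_Suc) auto
  moreover have "\<And>m. (par^^(Suc m)) h = (par^^m) (par h)" by (simp add: funpow_swap1)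
  ultimately show ?thesis unfolding dep_def par_def by simp
qed


lemma s'_HI: "y \<in> insert ii H \<Longrightarrow> s' y \<in> H \<or> s' y = ii"
proof -
  assume y: "y \<in> insert ii H"
  show ?thesis
  proof (cases "y = ii")
    case True thus ?thesis using s'ii rH by simp
  next
    case False
    hence yH: "y \<in> H" using y by simp
    show ?thesis using s'H[OF yH] sH[OF yH] by simp
  qed
qed

lemma vtx_ii: "vtx ii = ii" using V1[of 0 ii] by simp
lemma vtx_I: "x \<in> I \<Longrightarrow> vtx x = x" using V1[of 0 x] by simp

lemma t'_range: "x \<in> H \<Longrightarrow> t' x \<in> H \<or> t' x = ii"
proof -
  assume x: "x \<in> H"
  define y where "y = inv \<pi> x"
  have py: "\<pi> y = x" using pi_inv y_def by simp
  have ty: "t' x = s' y" using t'_pi[of y] py by simp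
  have "y \<in> insert ii H"
  proof (cases "y \<in> I'")
    case True thus ?thesis using IsubH by auto
  next
    case False thus ?thesis using pi_out[OF False] py x by simp
  qed
  thus ?thesis using s'_HI ty by simp
qed

lemma rho_facts: "\<rho> \<in> H" "vtx \<rho> = ii" "\<rho> = t' ii"
proof -
  show r0: "\<rho> = t' ii" unfolding lambda1_root_def by simp
  define y where "y = inv \<pi> ii"
  have py: "\<pi> y = ii" using pi_inv y_def by simp
  have yI: "y \<in> I'"
  proof (rule ccontr)
    assume "y \<notin> I'" thus False using pi_out py by auto
  qed
  have ry: "\<rho> = s' y" using r0 t'_pi[of y] py by simp
  show "vtx \<rho> = ii" using V2[OF yI] py ry by simp
  have "s' y \<noteq> ii"
  proof (cases "y = ii")
    case True thus ?thesis using s'ii rH iiH by auto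
  next
    case False
    hence yI2: "y \<in> I" using yI by simp
    hence yH: "y \<in> H" using IsubH by auto
    have "\<sigma> y \<noteq> r" using pre_r[OF yH] yI2 IiO by auto
    thus ?thesis using s'H[OF yH] sH[OF yH] iiH by auto
  qed
  moreover have "s' y \<in> H \<or> s' y = ii" using s'_HI yI IsubH by auto
  ultimately show "\<rho> \<in> H" using ry by simp
qed

lemma t_def2: "x \<in> H \<Longrightarrow> t x = (if t' x = ii then \<rho> else t' x)"
proof -
  assume x: "x \<in> H"
  have tx: "t x = (t'^^(LEAST k. 0<k \<and> (t'^^k) x \<in> H)) x"
    unfolding lambda1_tau_def restr_def using x by simp
  show ?thesis
  proof (cases "t' x = ii")
    case True
    have "(LEAST k. 0<k \<and> (t'^^k) x \<in> H) = 2"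
    proof (rule Least_equality)
      show "0 < (2::nat) \<and> (t'^^2) x \<in> H" using True rho_facts by (simp add: numeral_2_eq_2)
      fix k assume k: "0<k \<and> (t'^^k) x \<in> H"
      show "2 \<le> k"
      proof (rule ccontr)
        assume "\<not> 2 \<le> k" hence "k = 1" using k by simp
        thus False using k True iiH by simp
      qed
    qed
    thus ?thesis using tx True rho_facts by (simp add: numeral_2_eq_2)
  next
    case False
    hence tH: "t' x \<in> H" using t'_range[OF x] by simp
    have "(LEAST k. 0<k \<and> (t'^^k) x \<in> H) = 1"
      using tH by (intro Least_equality) auto
    thus ?thesis using tx False by simp
  qed
qed

lemma t_out: "x \<notin> H \<Longrightarrow> t x = x"
  unfolding lambda1_tau_def restr_def by simp

lemma t_O: "x \<in> H \<Longrightarrow> x \<notin> I \<Longrightarrow> t x = (if s' x = ii then \<rho> else s' x)"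
proof -
  assume x: "x \<in> H" "x \<notin> I"
  hence "x \<notin> I'" using iiH by auto
  hence "t' x = s' x" using t'_pi[of x] pi_out by simp
  thus ?thesis using t_def2[OF x(1)] by simp
qed

lemma t_I: "x \<in> I \<Longrightarrow> \<exists>y\<in>I'. \<pi> y = x \<and> t x = s' y \<and> s' y \<noteq> ii"
proof -
  assume x: "x \<in> I"
  hence xH: "x \<in> H" using IsubH by auto
  define y where "y = inv \<pi> x"
  have py: "\<pi> y = x" using pi_inv y_def by simp
  have yI: "y \<in> I'"
  proof (rule ccontr)
    assume "y \<notin> I'" thus False using pi_out py x by auto
  qed
  have ty: "t' x = s' y" using t'_pi[of y] py by simp
  have "s' y \<noteq> ii"
  proof
    assume "s' y = ii"
    hence "vtx (s' y) = ii" using vtx_ii by simp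
    hence "x = ii" using V2[OF yI] py by simp
    thus False using xH iiH by simp
  qed
  thus ?thesis using yI py ty t_def2[OF xH] by auto
qed

lemma tH: "x \<in> H \<Longrightarrow> t x \<in> H"
  using t_def2 t'_range rho_facts(1) by auto

lemma t_inj: "inj_on t H"
proof (rule inj_onI)
  fix x y assume x: "x \<in> H" and y: "y \<in> H" and e: "t x = t y"
  have r0: "\<rho> = t' ii" using rho_facts by simp
  have "t' x = t' y"
  proof (cases "t' x = ii"; cases "t' y = ii")
    assume "t' x = ii" "t' y = ii" thus ?thesis by simp
  next
    assume a: "t' x = ii" "t' y \<noteq> ii"
    hence "t' ii = t' y" using e t_def2[OF x] t_def2[OF y] r0 by simp
    hence "y = ii" using injD[OF t'_inj, of ii y] by simp
    thus ?thesis using y iiH by simp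
  next
    assume a: "t' x \<noteq> ii" "t' y = ii"
    hence "t' ii = t' x" using e t_def2[OF x] t_def2[OF y] r0 by simp
    hence "x = ii" using injD[OF t'_inj, of ii x] by simp
    thus ?thesis using x iiH by simp
  next
    assume "t' x \<noteq> ii" "t' y \<noteq> ii" thus ?thesis using e t_def2[OF x] t_def2[OF y] by simp
  qed
  thus "x = y" using t'_inj by (meson injD)
qed

lemma t_perm: "t permutes H"
  using perm_from_inj[OF finH t_inj] tH t_out by blast

lemma vtx_t: "x \<in> H \<Longrightarrow> vtx (t x) = vtx x"
proof -
  assume x: "x \<in> H"
  show ?thesis
  proof (cases "x \<in> I")
    case False
    hence xI': "x \<notin> I'" using x iiH by auto
    have v: "vtx (s' x) = vtx x" using V4[OF all_hit[OF x] xI'] .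
    show ?thesis
    proof (cases "s' x = ii")
      case True thus ?thesis using t_O[OF x False] v rho_facts(2) vtx_ii by simp
    next
      case F2: False thus ?thesis using t_O[OF x False] v by simp
    qed
  next
    case True
    then obtain y where y: "y \<in> I'" "\<pi> y = x" "t x = s' y" using t_I by blast
    thus ?thesis using V2[OF y(1)] vtx_I[OF True] by simp
  qed
qed

lemma reach_target:
  "\<forall>x\<in>H. (s'^^j) x \<in> I' \<longrightarrow> (\<forall>i<j. (s'^^i) x \<notin> I') \<longrightarrow>
     (t^^j) x = (if (s'^^j) x = ii then \<rho> else (s'^^j) x)"
proof (induction j)
  case 0 thus ?case using iiH by auto
next
  case (Suc m)
  show ?case
  proof (intro ballI impI)
    fix x assume x: "x \<in> H" and h: "(s'^^Suc m) x \<in> I'" and b: "\<forall>i<Suc m. (s'^^i) x \<notin> I'"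
    have xI: "x \<notin> I" using b by auto
    have sh: "\<And>i. (s'^^i) (s' x) = (s'^^(Suc i)) x" by (simp add: funpow_swap1)
    show "(t^^Suc m) x = (if (s'^^Suc m) x = ii then \<rho> else (s'^^Suc m) x)"
    proof (cases "s' x = ii")
      case True
      have "m = 0"
      proof (rule ccontr)
        assume "m \<noteq> 0"
        hence "(s'^^1) x \<notin> I'" using b[rule_format, of 1] by simp
        thus False using True by simp
      qed
      thus ?thesis using True t_O[OF x xI] by simp
    next
      case False
      have sxH: "s' x \<in> H" using s'H[OF x] sH[OF x] False by (auto split: if_splits)
      have tx: "t x = s' x" using t_O[OF x xI] False by simp
      have "(s'^^m) (s' x) \<in> I'" using h sh by simp
      moreover have "\<forall>i<m. (s'^^i) (s' x) \<notin> I'"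
      proof (intro allI impI)
        fix i assume "i < m"
        thus "(s'^^i) (s' x) \<notin> I'" using b[rule_format, of "Suc i"] sh[of i] by simp
      qed
      ultimately have "(t^^m) (s' x) = (if (s'^^m) (s' x) = ii then \<rho> else (s'^^m) (s' x))"
        using Suc.IH sxH by blast
      moreover have "(t^^Suc m) x = (t^^m) (t x)" by (simp only: funpow_Suc_right comp_apply)
      ultimately show ?thesis using tx sh[of m] by simp
    qed
  qed
qed

lemma vtx_range: "x \<in> H \<Longrightarrow> vtx x \<in> I'"
proof -
  assume x: "x \<in> H"
  obtain j where j: "(s'^^j) x \<in> I'" "\<forall>i<j. (s'^^i) x \<notin> I'" using least_hit[OF all_hit[OF x]] by blast
  show ?thesis using V1[OF j] j(1) by simp
qed

lemma reach_vtx: "x \<in> H \<Longrightarrow> \<exists>n. (t^^n) x = (if vtx x = ii then \<rho> else vtx x)"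
proof -
  assume x: "x \<in> H"
  obtain j where j: "(s'^^j) x \<in> I'" "\<forall>i<j. (s'^^i) x \<notin> I'" using least_hit[OF all_hit[OF x]] by blast
  have v: "vtx x = (s'^^j) x" using V1[OF j] .
  have "(t^^j) x = (if (s'^^j) x = ii then \<rho> else (s'^^j) x)"
    using reach_target[of j] x j by blast
  thus ?thesis unfolding v by (intro exI[of _ j])
qed

lemma t_permutation: "permutation t"
  unfolding permutation_permutes using t_perm finH by (intro exI[of _ H]) auto

lemma same_vtx: "x \<in> H \<Longrightarrow> y \<in> H \<Longrightarrow> vtx x = vtx y \<Longrightarrow> \<exists>n. (t^^n) x = y"
proof -
  assume x: "x \<in> H" and y: "y \<in> H" and e: "vtx x = vtx y"
  define T where "T = (if vtx x = ii then \<rho> else vtx x)"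
  obtain a where a: "(t^^a) x = T" using reach_vtx[OF x] T_def by blast
  have "\<exists>b. (t^^b) y = T" unfolding T_def e using reach_vtx[OF y] .
  then obtain b where b: "(t^^b) y = T" by blast
  obtain N where N: "t^^N = id" "b < N" using permutation_is_nilpotent'[OF t_permutation, of b] by blast
  have Nb: "N = (N - b) + b" using N(2) by simp
  have "(t^^N) y = (t^^(N-b)) ((t^^b) y)" by (subst Nb) (simp only: funpow_add comp_apply)
  hence "(t^^(N-b)) T = (t^^N) y" using b by simp
  hence "(t^^(N-b)) T = y" using N(1) by simp
  hence "(t^^(N-b + a)) x = y" using a by (simp add: funpow_add)
  thus ?thesis by blast
qed


lemma funpow_vtx: "x \<in> H \<Longrightarrow> (t^^n) x \<in> H \<and> vtx ((t^^n) x) = vtx x"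
  by (induction n) (auto simp: tH vtx_t)

lemma one_face_t: "\<forall>x\<in>H. \<forall>y\<in>H. \<exists>n. ((t \<circ> \<alpha>)^^n) x = y"
proof (rule one_face[of H t \<alpha> I vtx ii dep])
  show "finite H" using finH .
  show "bij_betw t H H" using permutes_imp_bij[OF t_perm] .
  show "\<forall>x\<in>H. \<alpha> x \<in> H \<and> \<alpha> x \<noteq> x \<and> \<alpha> (\<alpha> x) = x" using aH alH by blast
  show "I \<subseteq> H" using IsubH .
  show "\<forall>x\<in>H. x \<in> I \<longleftrightarrow> \<alpha> x \<notin> I" using IO by blast
  show "\<forall>h\<in>I. vtx h = h" using vtx_I by blast
  show "\<forall>x\<in>H. vtx (t x) = vtx x" using vtx_t by blast
  show "\<forall>x\<in>H. vtx x \<in> I \<or> vtx x = ii" using vtx_range by blast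
  show "ii \<notin> I" using iiH IsubH by blast
  show "\<forall>x\<in>H. \<forall>y\<in>H. vtx x = vtx y \<longrightarrow> (\<exists>n. (t^^n) x = y)" using same_vtx by blast
  show "\<forall>h\<in>I. dep h = Suc (dep (vtx (\<alpha> h)))" using dep_I by blast
qed

lemma orbit_t: "x \<in> H \<Longrightarrow> orbit t x = {y\<in>H. vtx y = vtx x}"
proof -
  assume x: "x \<in> H"
  have o: "orbit t x = {(t^^n) x | n. True}" using orbit_altdef_permutation[OF t_permutation] .
  show ?thesis
  proof
    show "orbit t x \<subseteq> {y\<in>H. vtx y = vtx x}" unfolding o using funpow_vtx[OF x] by auto
    show "{y\<in>H. vtx y = vtx x} \<subseteq> orbit t x"
    proof
      fix y assume "y \<in> {y\<in>H. vtx y = vtx x}"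
      hence "y \<in> H" "vtx x = vtx y" by auto
      then obtain n where "(t^^n) x = y" using same_vtx[OF x] by blast
      thus "y \<in> orbit t x" unfolding o by blast
    qed
  qed
qed

lemma vtxH: "vtx ` H = I'"
proof
  show "vtx ` H \<subseteq> I'" using vtx_range by blast
  show "I' \<subseteq> vtx ` H"
  proof
    fix v assume v: "v \<in> I'"
    show "v \<in> vtx ` H"
    proof (cases "v = ii")
      case True thus ?thesis using rho_facts(1,2) by (metis image_eqI)
    next
      case False
      hence "v \<in> I" using v by simp
      thus ?thesis using vtx_I IsubH by (metis image_eqI subsetD)
    qed
  qed
qed

lemma nvert: "ncycles t H = Suc (card I)"
proof -
  have e: "{orbit t x | x. x \<in> H} = (\<lambda>v. {y\<in>H. vtx y = v}) ` (vtx ` H)"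
    using orbit_t by auto
  have inj: "inj_on (\<lambda>v. {y\<in>H. vtx y = v}) (vtx ` H)"
  proof (rule inj_onI)
    fix v1 v2 assume v1: "v1 \<in> vtx ` H" and v2: "v2 \<in> vtx ` H"
      and eq: "{y\<in>H. vtx y = v1} = {y\<in>H. vtx y = v2}"
    obtain x where "x \<in> H" "vtx x = v1" using v1 by blast
    hence "x \<in> {y\<in>H. vtx y = v2}" using eq by blast
    thus "v1 = v2" using \<open>vtx x = v1\<close> by simp
  qed
  have finI: "finite I" using finH IsubH finite_subset by blast
  have "ncycles t H = card (vtx ` H)" unfolding ncycles_def e using card_image[OF inj] .
  also have "\<dots> = Suc (card I)"
  proof -
    have "ii \<notin> I" using iiH IsubH by blast
    thus ?thesis using vtxH finI by simp
  qed
  finally show ?thesis .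
qed

lemma a_permutation: "permutation \<alpha>"
  unfolding permutation_permutes using ap finH by (intro exI[of _ H]) auto

lemma orbit_a: "x \<in> H \<Longrightarrow> orbit \<alpha> x = {x, \<alpha> x}"
proof -
  assume x: "x \<in> H"
  have o: "orbit \<alpha> x = {(\<alpha>^^n) x | n. True}" using orbit_altdef_permutation[OF a_permutation] .
  have "\<And>n. (\<alpha>^^n) x \<in> {x, \<alpha> x}"
  proof -
    fix n show "(\<alpha>^^n) x \<in> {x, \<alpha> x}"
      by (induction n) (auto simp: aa[OF x])
  qed
  moreover have "x = (\<alpha>^^0) x" "\<alpha> x = (\<alpha>^^1) x" by simp_all
  ultimately show ?thesis unfolding o by blast
qed

lemma nedge: "ncycles \<alpha> H = card I"
proof -
  have e: "{orbit \<alpha> x | x. x \<in> H} = (\<lambda>h. {h, \<alpha> h}) ` I"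
  proof
    show "{orbit \<alpha> x | x. x \<in> H} \<subseteq> (\<lambda>h. {h, \<alpha> h}) ` I"
    proof
      fix S assume "S \<in> {orbit \<alpha> x | x. x \<in> H}"
      then obtain x where x: "x \<in> H" "S = {x, \<alpha> x}" using orbit_a by auto
      show "S \<in> (\<lambda>h. {h, \<alpha> h}) ` I"
      proof (cases "x \<in> I")
        case True thus ?thesis using x by blast
      next
        case False
        hence "\<alpha> x \<in> I" using IO x by blast
        moreover have "S = {\<alpha> x, \<alpha> (\<alpha> x)}" using x aa by auto
        ultimately show ?thesis by blast
      qed
    qed
    show "(\<lambda>h. {h, \<alpha> h}) ` I \<subseteq> {orbit \<alpha> x | x. x \<in> H}"
      using orbit_a IsubH by blast
  qed
  have inj: "inj_on (\<lambda>h. {h, \<alpha> h}) I"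
  proof (rule inj_onI)
    fix h1 h2 assume h1: "h1 \<in> I" and h2: "h2 \<in> I" and eq: "{h1, \<alpha> h1} = {h2, \<alpha> h2}"
    hence "h1 = h2 \<or> h1 = \<alpha> h2" by blast
    moreover have "\<alpha> h2 \<notin> I" using IO h2 IsubH by blast
    ultimately show "h1 = h2" using h1 by blast
  qed
  show ?thesis unfolding ncycles_def e using card_image[OF inj] .
qed

lemma ta_perm: "t \<circ> \<alpha> permutes H" using permutes_compose[OF ap t_perm] .

lemma nface: "ncycles (t \<circ> \<alpha>) H = 1"
proof -
  have perm: "permutation (t \<circ> \<alpha>)"
    unfolding permutation_permutes using ta_perm finH by (intro exI[of _ H]) auto
  have o: "\<And>x. x \<in> H \<Longrightarrow> orbit (t \<circ> \<alpha>) x = H"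
  proof -
    fix x assume x: "x \<in> H"
    have o: "orbit (t \<circ> \<alpha>) x = {((t \<circ> \<alpha>)^^n) x | n. True}" using orbit_altdef_permutation[OF perm] .
    have "\<And>n. ((t \<circ> \<alpha>)^^n) x \<in> H"
      using funpow_in[of H "t \<circ> \<alpha>"] x tH aH by simp
    moreover have "\<forall>y\<in>H. \<exists>n. ((t \<circ> \<alpha>)^^n) x = y" using one_face_t x by blast
    ultimately show "orbit (t \<circ> \<alpha>) x = H" unfolding o by (auto; metis)
  qed
  have "{orbit (t \<circ> \<alpha>) x | x. x \<in> H} = {H}" using o rH by auto
  thus ?thesis unfolding ncycles_def by simp
qed

lemma connected: "\<forall>x\<in>H. \<forall>y\<in>H. (x, y) \<in> ({(h, t h) | h. h \<in> H} \<union> {(h, \<alpha> h) | h. h \<in> H})\<^sup>*"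
proof (intro ballI)
  fix x y assume x: "x \<in> H" and y: "y \<in> H"
  let ?R = "{(h, t h) | h. h \<in> H} \<union> {(h, \<alpha> h) | h. h \<in> H}"
  have "\<And>n. (x, ((t \<circ> \<alpha>)^^n) x) \<in> ?R\<^sup>* \<and> ((t \<circ> \<alpha>)^^n) x \<in> H"
  proof -
    fix n show "(x, ((t \<circ> \<alpha>)^^n) x) \<in> ?R\<^sup>* \<and> ((t \<circ> \<alpha>)^^n) x \<in> H"
    proof (induction n)
      case 0 thus ?case using x by simp
    next
      case (Suc n)
      define z where "z = ((t \<circ> \<alpha>)^^n) x"
      have zH: "z \<in> H" using Suc.IH z_def by blast
      have "(z, \<alpha> z) \<in> ?R" using zH by blast
      moreover have "(\<alpha> z, t (\<alpha> z)) \<in> ?R" using aH[OF zH] by blast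
      ultimately have c: "(x, t (\<alpha> z)) \<in> ?R\<^sup>*" using Suc.IH z_def
        by (meson rtrancl_into_rtrancl)
      have eq: "((t \<circ> \<alpha>)^^Suc n) x = t (\<alpha> z)" using z_def by simp
      show ?case unfolding eq using c tH[OF aH[OF zH]] by blast
    qed
  qed
  moreover obtain n where "((t \<circ> \<alpha>)^^n) x = y" using one_face_t x y by blast
  ultimately show "(x, y) \<in> ?R\<^sup>*" by blast
qed

lemma is_map_t: "is_map H t \<alpha>"
  unfolding is_map_def using finH t_perm ap alH connected by blast

lemma conj2: "x \<in> H \<Longrightarrow> x \<notin> orbit t \<rho> \<Longrightarrow> card (orbit t x \<inter> I) = 1"
proof -
  assume x: "x \<in> H" and n: "x \<notin> orbit t \<rho>"
  have "vtx x \<noteq> ii" using n orbit_t[OF rho_facts(1)] rho_facts(2) x by auto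
  hence vI: "vtx x \<in> I" using vtx_range[OF x] by simp
  have "orbit t x \<inter> I = {vtx x}"
  proof
    show "orbit t x \<inter> I \<subseteq> {vtx x}" using orbit_t[OF x] vtx_I by auto
    show "{vtx x} \<subseteq> orbit t x \<inter> I" using orbit_t[OF x] vI vtx_I IsubH by auto
  qed
  thus ?thesis by simp
qed

lemma main: "plane_tree H t \<alpha> \<rho> \<and> (\<forall>x\<in>H. x \<notin> orbit t \<rho> \<longrightarrow> card (orbit t x \<inter> I) = 1)"
proof -
  have "nfaces H t \<alpha> = 1" unfolding nfaces_def using nface .
  moreover have "has_genus H t \<alpha> 0"
    unfolding has_genus_def nvertices_def nedges_def nfaces_def using nvert nedge nface by simp
  moreover have "rooted_map H t \<alpha> \<rho>" unfolding rooted_map_def using is_map_t rho_facts(1) by blast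
  ultimately show ?thesis unfolding plane_tree_def using conj2 by blast
qed

end

theorem mainTheorem11:
  fixes H I Ou :: "'a set" and \<sigma> \<alpha> :: "'a \<Rightarrow> 'a" and r ii oo :: 'a
  assumes "rooted_map H \<sigma> \<alpha> r"
    and "orientation H \<alpha> I Ou"
    and "left_connected \<sigma> \<alpha> r I Ou"
    and "ii \<notin> H" and "oo \<notin> H" and "ii \<noteq> oo"
  shows "plane_tree H (lambda1_tau H \<sigma> r I ii oo) \<alpha> (lambda1_root \<sigma> r I ii oo)
    \<and> (\<forall>x\<in>H. x \<notin> orbit (lambda1_tau H \<sigma> r I ii oo) (lambda1_root \<sigma> r I ii oo)
          \<longrightarrow> card (orbit (lambda1_tau H \<sigma> r I ii oo) x \<inter> I) = 1)"
proof -
  interpret L1 H I Ou \<sigma> \<alpha> r ii oo using assms by unfold_locales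
  show ?thesis using main .
qed

end
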